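(* Every second-order polynomial has a description.
   Context: Second-order polynomials are the smallest class of functions $P\colon\mathbb N^{\mathbb N}\times\mathbb N\to\mathbb N$ that contains all $(l,n)\mapsto p(n)$ for polynomials $p$ with natural-number coefficients, and is closed under pointwise sum, pointwise product, and $P\mapsto P^+$ with $P^+(l,n)=l(P(l,n))$. A polynomial tree is a finite rooted tree in which each node is labeled by a polynomial in $\mathbb N[X_0,\ldots,X_k]$, where $k$ is the number of children of that node, and the children of each node are linearly ordered. To each node one recursively assigns a function $\mathbb N^{\mathbb N}\times\mathbb N\to\mathbb N$: a leaf labeled $t\in\mathbb N[X_0]$ gets $(l,n)\mapsto t(n)$; a node labeled $t$ whose children (in order) were assigned $P_1,\ldots,P_k$ gets $(l,n)\mapsto t(n,l(P_1(l,n)),\ldots,l(P_k(l,n)))$. A polynomial tree is a description of $P$ if $P$ is assigned to its root. *)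

theory Defs
  imports "HOL-Computational_Algebra.Polynomial" "HOL-Library.Poly_Mapping"
begin

text \<open>Multivariate polynomials with natural-number coefficients in variables X_0, X_1, ...,
  represented as finitely supported maps from monomials (exponent vectors) to coefficients.\<close>
type_synonym mpoly_nat = "(nat \<Rightarrow>\<^sub>0 nat) \<Rightarrow>\<^sub>0 nat"

definition mpoly_eval :: "mpoly_nat \<Rightarrow> (nat \<Rightarrow> nat) \<Rightarrow> nat" where
  "mpoly_eval p v = (\<Sum>m\<in>Poly_Mapping.keys p. Poly_Mapping.lookup p m * (\<Prod>i\<in>Poly_Mapping.keys m. v i ^ Poly_Mapping.lookup m i))"

definition mpoly_vars :: "mpoly_nat \<Rightarrow> nat set" where
  "mpoly_vars p = \<Union> (Poly_Mapping.keys ` Poly_Mapping.keys p)"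

inductive_set SOP :: "((nat \<Rightarrow> nat) \<Rightarrow> nat \<Rightarrow> nat) set" where
  const: "(\<lambda>l n. poly p n) \<in> SOP"
| add: "P \<in> SOP \<Longrightarrow> Q \<in> SOP \<Longrightarrow> (\<lambda>l n. P l n + Q l n) \<in> SOP"
| mult: "P \<in> SOP \<Longrightarrow> Q \<in> SOP \<Longrightarrow> (\<lambda>l n. P l n * Q l n) \<in> SOP"
| lift: "P \<in> SOP \<Longrightarrow> (\<lambda>l n. l (P l n)) \<in> SOP"

datatype ptree = PNode mpoly_nat "ptree list"

fun ptree_wf :: "ptree \<Rightarrow> bool" where
  "ptree_wf (PNode t cs) = (mpoly_vars t \<subseteq> {..length cs} \<and> (\<forall>c\<in>set cs. ptree_wf c))"

text \<open>The function assigned to a node: X_0 is n, X_i is l(P_i(l,n)).\<close>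
fun ptree_sem :: "ptree \<Rightarrow> (nat \<Rightarrow> nat) \<Rightarrow> nat \<Rightarrow> nat" where
  "ptree_sem (PNode t cs) l n =
     mpoly_eval t (\<lambda>i. if i = 0 then n else l (map (\<lambda>c. ptree_sem c l n) cs ! (i - 1)))"

definition is_description :: "ptree \<Rightarrow> ((nat \<Rightarrow> nat) \<Rightarrow> nat \<Rightarrow> nat) \<Rightarrow> bool" where
  "is_description T P \<longleftrightarrow> ptree_wf T \<and> ptree_sem T = P"

end

theory Submission
  imports Defs
begin

datatype ex = C nat | V nat | A ex ex | M ex ex

fun eeval :: "ex \<Rightarrow> (nat \<Rightarrow> nat) \<Rightarrow> nat" where
  "eeval (C c) v = c"
| "eeval (V i) v = v i"
| "eeval (A a b) v = eeval a v + eeval b v"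
| "eeval (M a b) v = eeval a v * eeval b v"

fun evars :: "ex \<Rightarrow> nat set" where
  "evars (C c) = {}"
| "evars (V i) = {i}"
| "evars (A a b) = evars a \<union> evars b"
| "evars (M a b) = evars a \<union> evars b"

fun ren :: "(nat \<Rightarrow> nat) \<Rightarrow> ex \<Rightarrow> ex" where
  "ren g (C c) = C c"
| "ren g (V i) = V (g i)"
| "ren g (A a b) = A (ren g a) (ren g b)"
| "ren g (M a b) = M (ren g a) (ren g b)"

lemma eeval_cong: "(\<forall>i\<in>evars e. v i = w i) \<Longrightarrow> eeval e v = eeval e w"
  by (induction e) auto

lemma eeval_ren: "eeval (ren g e) v = eeval e (v \<circ> g)"
  by (induction e) auto

lemma evars_ren: "evars (ren g e) = g ` evars e"
  by (induction e) auto

definition monev :: "(nat \<Rightarrow>\<^sub>0 nat) \<Rightarrow> (nat \<Rightarrow> nat) \<Rightarrow> nat" where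
  "monev m v = (\<Prod>i\<in>Poly_Mapping.keys m. v i ^ Poly_Mapping.lookup m i)"

lemma monev_S: "finite S \<Longrightarrow> Poly_Mapping.keys m \<subseteq> S \<Longrightarrow>
  monev m v = (\<Prod>i\<in>S. v i ^ Poly_Mapping.lookup m i)"
  unfolding monev_def
  by (rule prod.mono_neutral_left) (auto simp: in_keys_iff)

lemma monev_add: "monev (m1 + m2) v = monev m1 v * monev m2 v"
proof -
  let ?S = "Poly_Mapping.keys m1 \<union> Poly_Mapping.keys m2"
  have f: "finite ?S" by simp
  have "monev (m1 + m2) v = (\<Prod>i\<in>?S. v i ^ Poly_Mapping.lookup (m1 + m2) i)"
    by (rule monev_S[OF f]) (simp add: keys_add)
  also have "\<dots> = (\<Prod>i\<in>?S. v i ^ Poly_Mapping.lookup m1 i) * (\<Prod>i\<in>?S. v i ^ Poly_Mapping.lookup m2 i)"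
    by (simp add: lookup_add power_add prod.distrib)
  also have "\<dots> = monev m1 v * monev m2 v"
    using monev_S[OF f, of m1 v] monev_S[OF f, of m2 v] by simp
  finally show ?thesis .
qed

lemma monev_var: "monev (Poly_Mapping.single i 1) v = v i"
  by (simp add: monev_def)

lemma monev_var1: "monev (Poly_Mapping.single i (Suc 0)) v = v i"
  by (simp add: monev_def)

lemma monev_zero: "monev 0 v = 1"
  by (simp add: monev_def)

lemma mpoly_eval_S: "finite S \<Longrightarrow> Poly_Mapping.keys p \<subseteq> S \<Longrightarrow>
  mpoly_eval p v = (\<Sum>m\<in>S. Poly_Mapping.lookup p m * monev m v)"
  unfolding mpoly_eval_def monev_def[symmetric]
  by (rule sum.mono_neutral_left) (auto simp: in_keys_iff)

lemma mpoly_eval_add: "mpoly_eval (p + q) v = mpoly_eval p v + mpoly_eval q v"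
proof -
  let ?S = "Poly_Mapping.keys p \<union> Poly_Mapping.keys q"
  have f: "finite ?S" by simp
  have "mpoly_eval (p + q) v = (\<Sum>m\<in>?S. Poly_Mapping.lookup (p + q) m * monev m v)"
    by (rule mpoly_eval_S[OF f]) (simp add: keys_add)
  also have "\<dots> = (\<Sum>m\<in>?S. Poly_Mapping.lookup p m * monev m v) + (\<Sum>m\<in>?S. Poly_Mapping.lookup q m * monev m v)"
    by (simp add: lookup_add distrib_right sum.distrib)
  also have "\<dots> = mpoly_eval p v + mpoly_eval q v"
    using mpoly_eval_S[OF f, of p v] mpoly_eval_S[OF f, of q v] by simp
  finally show ?thesis .
qed

lemma mpoly_eval_zero: "mpoly_eval 0 v = 0"
  by (simp add: mpoly_eval_def)

lemma mpoly_eval_single: "mpoly_eval (Poly_Mapping.single m c) v = c * monev m v"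
  by (simp add: mpoly_eval_def monev_def)

lemma mpoly_vars_add: "mpoly_vars (p + q) \<subseteq> mpoly_vars p \<union> mpoly_vars q"
  unfolding mpoly_vars_def using keys_add[of p q] by blast

lemma mpoly_vars_single: "mpoly_vars (Poly_Mapping.single m c) \<subseteq> Poly_Mapping.keys m"
  unfolding mpoly_vars_def by auto

lemma mpoly_vars_zero: "mpoly_vars 0 = {}"
  unfolding mpoly_vars_def by auto

type_synonym mlist = "(nat \<times> (nat \<Rightarrow>\<^sub>0 nat)) list"

definition leval :: "mlist \<Rightarrow> (nat \<Rightarrow> nat) \<Rightarrow> nat" where
  "leval L v = (\<Sum>(c,m)\<leftarrow>L. c * monev m v)"

definition lvars :: "mlist \<Rightarrow> nat set" where
  "lvars L = (\<Union>(c,m)\<in>set L. Poly_Mapping.keys m)"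

definition lmul :: "mlist \<Rightarrow> mlist \<Rightarrow> mlist" where
  "lmul L1 L2 = concat (map (\<lambda>(c1,m1). map (\<lambda>(c2,m2). (c1*c2, m1+m2)) L2) L1)"

lemma leval_append: "leval (L1 @ L2) v = leval L1 v + leval L2 v"
  by (simp add: leval_def)

lemma leval_mul: "leval (lmul L1 L2) v = leval L1 v * leval L2 v"
proof (induction L1)
  case Nil
  then show ?case by (simp add: leval_def lmul_def)
next
  case (Cons a L1)
  obtain c1 m1 where a: "a = (c1, m1)" by force
  have inner: "leval (map (\<lambda>(c2,m2). (c1*c2, m1+m2)) L2) v = c1 * monev m1 v * leval L2 v"
    by (induction L2) (auto simp: leval_def monev_add algebra_simps)
  have "lmul (a # L1) L2 = map (\<lambda>(c2,m2). (c1*c2, m1+m2)) L2 @ lmul L1 L2"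
    by (simp add: lmul_def a)
  then show ?case using Cons inner by (simp add: leval_append a leval_def algebra_simps)
qed

lemma lvars_append: "lvars (L1 @ L2) = lvars L1 \<union> lvars L2"
  by (auto simp: lvars_def)

lemma lvars_mul: "lvars (lmul L1 L2) \<subseteq> lvars L1 \<union> lvars L2"
  unfolding lvars_def lmul_def using keys_add by fastforce

fun nf :: "ex \<Rightarrow> mlist" where
  "nf (C c) = [(c, 0)]"
| "nf (V i) = [(1, Poly_Mapping.single i 1)]"
| "nf (A a b) = nf a @ nf b"
| "nf (M a b) = lmul (nf a) (nf b)"

lemma nf_eval: "leval (nf e) v = eeval e v"
  by (induction e) (auto simp: leval_def monev_var monev_var1 monev_zero leval_mul[unfolded leval_def])

lemma nf_vars: "lvars (nf e) \<subseteq> evars e"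
proof (induction e)
  case (M a b) then show ?case using lvars_mul[of "nf a" "nf b"] by auto
qed (auto simp: lvars_def lvars_append)

definition topoly :: "mlist \<Rightarrow> mpoly_nat" where
  "topoly L = sum_list (map (\<lambda>(c,m). Poly_Mapping.single m c) L)"

lemma topoly_eval: "mpoly_eval (topoly L) v = leval L v"
  by (induction L) (auto simp: topoly_def leval_def mpoly_eval_zero mpoly_eval_add mpoly_eval_single)

lemma topoly_vars: "mpoly_vars (topoly L) \<subseteq> lvars L"
proof (induction L)
  case Nil then show ?case by (simp add: topoly_def mpoly_vars_zero)
next
  case (Cons a L)
  obtain c m where a: "a = (c, m)" by force
  have "topoly (a # L) = Poly_Mapping.single m c + topoly L" by (simp add: topoly_def a)
  then show ?case using Cons mpoly_vars_add[of "Poly_Mapping.single m c" "topoly L"]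
      mpoly_vars_single[of m c] by (auto simp: lvars_def a)
qed

lemma ex_mpoly: "\<exists>t. mpoly_vars t \<subseteq> evars e \<and> (\<forall>v. mpoly_eval t v = eeval e v)"
proof (intro exI[of _ "topoly (nf e)"] conjI allI)
  show "mpoly_vars (topoly (nf e)) \<subseteq> evars e"
    using topoly_vars[of "nf e"] nf_vars[of e] by (rule order_trans)
  fix v show "mpoly_eval (topoly (nf e)) v = eeval e v"
    by (simp only: topoly_eval nf_eval)
qed

definition env :: "ptree list \<Rightarrow> (nat \<Rightarrow> nat) \<Rightarrow> nat \<Rightarrow> nat \<Rightarrow> nat" where
  "env cs l n = (\<lambda>i. if i = 0 then n else l (map (\<lambda>c. ptree_sem c l n) cs ! (i - 1)))"

definition Rep :: "((nat \<Rightarrow> nat) \<Rightarrow> nat \<Rightarrow> nat) \<Rightarrow> bool" where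
  "Rep P \<longleftrightarrow> (\<exists>e cs. (\<forall>c\<in>set cs. ptree_wf c) \<and> evars e \<subseteq> {..length cs} \<and>
      (\<forall>l n. P l n = eeval e (env cs l n)))"

lemma Rep_desc: assumes "Rep P" shows "\<exists>T. is_description T P"
proof -
  obtain e cs where wf: "\<forall>c\<in>set cs. ptree_wf c" and ev: "evars e \<subseteq> {..length cs}"
    and P: "\<forall>l n. P l n = eeval e (env cs l n)" using assms unfolding Rep_def by blast
  obtain t where t: "mpoly_vars t \<subseteq> evars e" "\<forall>v. mpoly_eval t v = eeval e v"
    using ex_mpoly by blast
  have "is_description (PNode t cs) P"
    unfolding is_description_def using wf ev t P by (auto simp: fun_eq_iff env_def)
  then show ?thesis by blast
qed

lemma poly_ex: "\<exists>e. evars e \<subseteq> {0} \<and> (\<forall>v. eeval e v = poly p (v 0))"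
proof (induction p rule: pCons_induct)
  case 0
  then show ?case by (intro exI[of _ "C 0"]) auto
next
  case (pCons a p)
  then obtain e where "evars e \<subseteq> {0}" "\<forall>v. eeval e v = poly p (v 0)" by blast
  then show ?case by (intro exI[of _ "A (C a) (M (V 0) e)"]) auto
qed

lemma env_append1: "i \<le> length cs1 \<Longrightarrow> env (cs1 @ cs2) l n i = env cs1 l n i"
proof (cases i)
  case (Suc j)
  assume "i \<le> length cs1"
  then have "j < length cs1" using Suc by simp
  then show ?thesis using Suc by (simp add: env_def nth_append)
qed (simp add: env_def)

lemma env_append2: "i \<le> length cs2 \<Longrightarrow>
  env (cs1 @ cs2) l n (if i = 0 then 0 else i + length cs1) = env cs2 l n i"
proof (cases i)
  case (Suc j)
  have "Suc j + length cs1 - 1 = j + length cs1" by simp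
  moreover have "map (\<lambda>c. ptree_sem c l n) (cs1 @ cs2) ! (j + length cs1) = map (\<lambda>c. ptree_sem c l n) cs2 ! j"
    by (simp add: nth_append)
  ultimately show ?thesis using Suc by (simp add: env_def)
qed (simp add: env_def)

lemma Rep_lift: assumes "Rep P" shows "Rep (\<lambda>l n. l (P l n))"
proof -
  obtain T where T: "is_description T P" using Rep_desc[OF assms] by blast
  have wf: "ptree_wf T" and sem: "ptree_sem T = P" using T unfolding is_description_def by auto
  show ?thesis unfolding Rep_def
  proof (intro exI[of _ "V 1"] exI[of _ "[T]"] conjI allI)
    show "\<forall>c\<in>set [T]. ptree_wf c" using wf by simp
    show "evars (V 1) \<subseteq> {..length [T]}" by simp
  next
    fix l n
    have "env [T] l n 1 = l (ptree_sem T l n)" by (simp add: env_def)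
    then show "l (P l n) = eeval (V 1) (env [T] l n)" using sem by simp
  qed
qed

lemma SOP_Rep: "P \<in> SOP \<Longrightarrow> Rep P"
proof (induction rule: SOP.induct)
  case (const p)
  obtain e where e: "evars e \<subseteq> {0}" "\<forall>v. eeval e v = poly p (v 0)" using poly_ex by blast
  show ?case unfolding Rep_def
    by (rule exI[of _ e], rule exI[of _ "[]"]) (use e in \<open>auto simp: env_def\<close>)
next
  case (add P Q)
  obtain e1 cs1 where 1: "\<forall>c\<in>set cs1. ptree_wf c" "evars e1 \<subseteq> {..length cs1}"
    "\<forall>l n. P l n = eeval e1 (env cs1 l n)" using add unfolding Rep_def by blast
  obtain e2 cs2 where 2: "\<forall>c\<in>set cs2. ptree_wf c" "evars e2 \<subseteq> {..length cs2}"
    "\<forall>l n. Q l n = eeval e2 (env cs2 l n)" using add unfolding Rep_def by blast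
  define g where "g = (\<lambda>i::nat. if i = 0 then 0 else i + length cs1)"
  have a: "eeval e1 (env (cs1 @ cs2) l n) = eeval e1 (env cs1 l n)" for l n
    by (rule eeval_cong) (use 1(2) env_append1 in fastforce)
  have b: "eeval (ren g e2) (env (cs1 @ cs2) l n) = eeval e2 (env cs2 l n)" for l n
    unfolding eeval_ren
    by (rule eeval_cong) (use 2(2) env_append2 in \<open>fastforce simp: g_def\<close>)
  have gv: "g ` evars e2 \<subseteq> {..length (cs1 @ cs2)}" using 2(2) unfolding g_def by auto
  have v: "evars (A e1 (ren g e2)) \<subseteq> {..length (cs1 @ cs2)}"
    using 1(2) gv by (auto simp: evars_ren)
  show ?case unfolding Rep_def
  proof (intro exI[of _ "A e1 (ren g e2)"] exI[of _ "cs1 @ cs2"] conjI allI)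
    show "\<forall>c\<in>set (cs1 @ cs2). ptree_wf c" using 1(1) 2(1) by auto
    show "evars (A e1 (ren g e2)) \<subseteq> {..length (cs1 @ cs2)}" by (rule v)
  next
    fix l n
    show "P l n + Q l n = eeval (A e1 (ren g e2)) (env (cs1 @ cs2) l n)"
    proof -
      have p: "P l n = eeval e1 (env cs1 l n)" using 1(3) by blast
      have q: "Q l n = eeval e2 (env cs2 l n)" using 2(3) by blast
      show ?thesis by (simp only: eeval.simps a b p q)
    qed
  qed
next
  case (mult P Q)
  obtain e1 cs1 where 1: "\<forall>c\<in>set cs1. ptree_wf c" "evars e1 \<subseteq> {..length cs1}"
    "\<forall>l n. P l n = eeval e1 (env cs1 l n)" using mult unfolding Rep_def by blast
  obtain e2 cs2 where 2: "\<forall>c\<in>set cs2. ptree_wf c" "evars e2 \<subseteq> {..length cs2}"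
    "\<forall>l n. Q l n = eeval e2 (env cs2 l n)" using mult unfolding Rep_def by blast
  define g where "g = (\<lambda>i::nat. if i = 0 then 0 else i + length cs1)"
  have a: "eeval e1 (env (cs1 @ cs2) l n) = eeval e1 (env cs1 l n)" for l n
    by (rule eeval_cong) (use 1(2) env_append1 in fastforce)
  have b: "eeval (ren g e2) (env (cs1 @ cs2) l n) = eeval e2 (env cs2 l n)" for l n
    unfolding eeval_ren
    by (rule eeval_cong) (use 2(2) env_append2 in \<open>fastforce simp: g_def\<close>)
  have gv: "g ` evars e2 \<subseteq> {..length (cs1 @ cs2)}" using 2(2) unfolding g_def by auto
  have v: "evars (M e1 (ren g e2)) \<subseteq> {..length (cs1 @ cs2)}"
    using 1(2) gv by (auto simp: evars_ren)
  show ?case unfolding Rep_def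
  proof (intro exI[of _ "M e1 (ren g e2)"] exI[of _ "cs1 @ cs2"] conjI allI)
    show "\<forall>c\<in>set (cs1 @ cs2). ptree_wf c" using 1(1) 2(1) by auto
    show "evars (M e1 (ren g e2)) \<subseteq> {..length (cs1 @ cs2)}" by (rule v)
  next
    fix l n
    show "P l n * Q l n = eeval (M e1 (ren g e2)) (env (cs1 @ cs2) l n)"
    proof -
      have p: "P l n = eeval e1 (env cs1 l n)" using 1(3) by blast
      have q: "Q l n = eeval e2 (env cs2 l n)" using 2(3) by blast
      show ?thesis by (simp only: eeval.simps a b p q)
    qed
  qed
next
  case (lift P) show ?case by (rule Rep_lift[OF lift.IH])
qed

theorem mainTheorem3:
  fixes P :: "(nat \<Rightarrow> nat) \<Rightarrow> nat \<Rightarrow> nat"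
  assumes "P \<in> SOP"
  shows "\<exists>T. is_description T P"
  using Rep_desc[OF SOP_Rep[OF assms]] .

end
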